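(* For every $n\ge2$, $$\mathrm{Var}\big(U^{(n)}-\tau^{(n)}\big)=4(H_{n,2}-1)-\frac{2H_{n,1}^2}{n-1}+\frac{4H_{n,1}}{n-1}+\frac{6H_{n,2}}{n-1}-\frac{8}{n-1}-\frac{4(H_{n,1}-1)^2}{(n-1)^2},$$ which tends to $\frac{2\pi^2}{3}-4$ as $n\to\infty$.
   Context: Fix $n\ge 2$. A Yule tree with speciation rate 1 on $n$ tips: start with a single lineage; each lineage independently splits into two at rate 1; the process is stopped just before the $n$-th speciation event, so the tree has $n$ tips and $n-1$ speciation (internal) nodes, numbered $1,\dots,n-1$ chronologically from the root. For $i=1,\dots,n$ let $T_i$ be the length of the time interval during which there are exactly $i$ lineages; the $T_i$ are independent, $T_i\sim\mathrm{Exp}(i)$ (rate $i$), the $k$-th speciation occurs at time $T_1+\dots+T_k$, and at each speciation the splitting lineage is uniformly chosen among current lineages, independently of the $T_i$. The tree height is $U^{(n)}=T_1+\dots+T_n$. Choose an unordered pair of distinct tips uniformly at random and let $\kappa_n\in\{1,\dots,n-1\}$ be the index of the speciation event at which their lineages split; the coalescent time of the pair is $\tau^{(n)}=T_{\kappa_n+1}+\dots+T_n$. $H_{n,r}=\sum_{i=1}^n i^{-r}$. *)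

theory Defs
  imports "HOL-Probability.Probability"
begin

definition Hn :: "nat \<Rightarrow> nat \<Rightarrow> real" where
  "Hn n r = (\<Sum>i=1..n. 1 / real i ^ r)"

text \<open>When there are k lineages,
  labelled 0..k-1, the k-th speciation event splits lineage s k (uniform in 0..k-1);
  afterwards the two daughters are labelled s k and k.  Thus the parent, at the time
  with k lineages, of a lineage x (label in 0..k) existing with k+1 lineages is
  yule_parent s k x.\<close>
definition yule_parent :: "(nat \<Rightarrow> nat) \<Rightarrow> nat \<Rightarrow> nat \<Rightarrow> nat" where
  "yule_parent s k x = (if x = k then s k else x)"

text \<open>yule_anc s m d x: ancestor, d events back, of lineage x living when there are m lineages.\<close>
fun yule_anc :: "(nat \<Rightarrow> nat) \<Rightarrow> nat \<Rightarrow> nat \<Rightarrow> nat \<Rightarrow> nat" where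
  "yule_anc s m 0 x = x"
| "yule_anc s m (Suc d) x = yule_anc s (m - 1) d (yule_parent s (m - 1) x)"

definition anc_at :: "nat \<Rightarrow> (nat \<Rightarrow> nat) \<Rightarrow> nat \<Rightarrow> nat \<Rightarrow> nat" where
  "anc_at n s k x = yule_anc s n (n - k) x"

definition split_index :: "nat \<Rightarrow> (nat \<Rightarrow> nat) \<Rightarrow> nat set \<Rightarrow> nat" where
  "split_index n s P = (THE k. 1 \<le> k \<and> k < n \<and>
      card (anc_at n s k ` P) = 1 \<and> card (anc_at n s (k + 1) ` P) = 2)"

definition yule_discrete :: "nat \<Rightarrow> ((nat \<Rightarrow> nat) \<times> nat set) pmf" where
  "yule_discrete n =
     pair_pmf (Pi_pmf {1..<n} 0 (\<lambda>k. pmf_of_set {0..<k}))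
              (pmf_of_set {P. \<exists>a b. P = {a, b} \<and> a < n \<and> b < n \<and> a \<noteq> b})"

definition yule_space :: "nat \<Rightarrow> (((nat \<Rightarrow> nat) \<times> nat set) \<times> (nat \<Rightarrow> real)) measure" where
  "yule_space n = measure_pmf (yule_discrete n) \<Otimes>\<^sub>M
      (\<Pi>\<^sub>M i\<in>{1..n}. density lborel (exponential_density (real i)))"

definition yule_height :: "nat \<Rightarrow> ((nat \<Rightarrow> nat) \<times> nat set) \<times> (nat \<Rightarrow> real) \<Rightarrow> real" where
  "yule_height n \<omega> = (\<Sum>i=1..n. snd \<omega> i)"

definition yule_coal :: "nat \<Rightarrow> ((nat \<Rightarrow> nat) \<times> nat set) \<times> (nat \<Rightarrow> real) \<Rightarrow> real" where
  "yule_coal n \<omega> = (\<Sum>i=split_index n (fst (fst \<omega>)) (snd (fst \<omega>)) + 1..n. snd \<omega> i)"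

end

theory Submission
  imports Defs "HOL-Real_Asymp.Real_Asymp"
begin


definition ypred :: "nat \<Rightarrow> (nat \<Rightarrow> nat) \<Rightarrow> nat set \<Rightarrow> nat \<Rightarrow> bool" where
  "ypred n s P k \<longleftrightarrow> 1 \<le> k \<and> k < n \<and>
      card (anc_at n s k ` P) = 1 \<and> card (anc_at n s (k + 1) ` P) = 2"

lemma split_index_alt: "split_index n s P = (THE k. ypred n s P k)"
  unfolding split_index_def ypred_def ..

lemma anc_at_Suc: "k \<le> n \<Longrightarrow> anc_at (Suc n) s k x = anc_at n s k (yule_parent s n x)"
  by (simp add: anc_at_def Suc_diff_le)

lemma anc_at_self: "anc_at n s n x = x"
  by (simp add: anc_at_def)

lemma yule_anc_local: "d \<le> m \<Longrightarrow> (\<forall>j<m. s j = t j) \<Longrightarrow> yule_anc s m d x = yule_anc t m d x"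
proof (induction d arbitrary: m x)
  case 0 then show ?case by simp
next
  case (Suc d)
  have "yule_parent s (m - 1) x = yule_parent t (m - 1) x"
    using Suc.prems by (simp add: yule_parent_def)
  then show ?case using Suc by simp
qed

lemma anc_at_local: "(\<forall>j<n. s j = t j) \<Longrightarrow> anc_at n s k x = anc_at n t k x"
  unfolding anc_at_def by (rule yule_anc_local) auto

lemma split_index_local: "(\<forall>j<n. s j = t j) \<Longrightarrow> split_index n s P = split_index n t P"
  unfolding split_index_def using anc_at_local[of n s t] by presburger

definition valid :: "nat \<Rightarrow> (nat \<Rightarrow> nat) \<Rightarrow> bool" where
  "valid n s \<longleftrightarrow> (\<forall>k. 1 \<le> k \<and> k < n \<longrightarrow> s k < k)"

lemma ypred_Suc:
  assumes "card P = 2"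
  shows "ypred (Suc n) s P k \<longleftrightarrow>
     (k < n \<and> ypred n s (yule_parent s n ` P) k) \<or> (k = n \<and> 1 \<le> n \<and> card (yule_parent s n ` P) = 1)"
proof (cases "k < n")
  case True
  have "anc_at (Suc n) s k ` P = anc_at n s k ` (yule_parent s n ` P)"
       "anc_at (Suc n) s (k+1) ` P = anc_at n s (k+1) ` (yule_parent s n ` P)"
    using True by (auto simp: anc_at_Suc image_image)
  then show ?thesis using True by (simp add: ypred_def)
next
  case False
  show ?thesis
  proof (cases "k = n")
    case True
    have "anc_at (Suc n) s k ` P = yule_parent s n ` P"
      using True by (auto simp: anc_at_Suc anc_at_self image_image)
    moreover have "anc_at (Suc n) s (k+1) ` P = P"
      using True by (simp add: anc_at_self)
    ultimately show ?thesis using True assms by (auto simp: ypred_def)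
  qed (use False in \<open>auto simp: ypred_def\<close>)
qed

lemma valid_Suc: "valid (Suc n) s \<Longrightarrow> valid n s"
  by (simp add: valid_def)

lemma parent_lt: "valid (Suc n) s \<Longrightarrow> x < Suc n \<Longrightarrow> 1 \<le> n \<Longrightarrow> yule_parent s n x < n"
  by (auto simp: valid_def yule_parent_def)

lemma ypred_unique:
  "valid n s \<Longrightarrow> a < n \<Longrightarrow> b < n \<Longrightarrow> a \<noteq> b \<Longrightarrow> \<exists>!k. ypred n s {a, b} k"
proof (induction n arbitrary: a b)
  case 0 then show ?case by simp
next
  case (Suc n)
  have n1: "1 \<le> n" using Suc.prems by auto
  define a' where "a' = yule_parent s n a"
  define b' where "b' = yule_parent s n b"
  have lt: "a' < n" "b' < n" using parent_lt[OF Suc.prems(1) _ n1] Suc.prems a'_def b'_def by auto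
  have c2: "card {a, b} = 2" using Suc.prems by simp
  have img: "yule_parent s n ` {a, b} = {a', b'}" by (simp add: a'_def b'_def)
  show ?case
  proof (cases "a' = b'")
    case True
    have "ypred (Suc n) s {a, b} k \<longleftrightarrow> k = n" for k
      unfolding ypred_Suc[OF c2] img using True n1 by (auto simp: ypred_def)
    then show ?thesis by auto
  next
    case False
    from Suc.IH[OF valid_Suc[OF Suc.prems(1)] lt False]
    obtain k where k: "ypred n s {a', b'} k" "\<And>k'. ypred n s {a', b'} k' \<Longrightarrow> k' = k" by blast
    have "ypred (Suc n) s {a, b} k' \<longleftrightarrow> ypred n s {a', b'} k'" for k'
      unfolding ypred_Suc[OF c2] img using False by (auto simp: ypred_def)
    then show ?thesis using k by blast
  qed
qed

lemma split_index_ypred: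
  "valid n s \<Longrightarrow> a < n \<Longrightarrow> b < n \<Longrightarrow> a \<noteq> b \<Longrightarrow> ypred n s {a, b} (split_index n s {a, b})"
  unfolding split_index_alt by (rule theI', rule ypred_unique)

lemma split_index_range:
  "valid n s \<Longrightarrow> a < n \<Longrightarrow> b < n \<Longrightarrow> a \<noteq> b \<Longrightarrow> split_index n s {a, b} \<in> {1..<n}"
  using split_index_ypred[of n s a b] by (auto simp: ypred_def)

lemma split_index_Suc:
  assumes "valid (Suc n) s" "a < Suc n" "b < Suc n" "a \<noteq> b"
  shows "split_index (Suc n) s {a, b} =
     (if yule_parent s n a = yule_parent s n b then n
      else split_index n s {yule_parent s n a, yule_parent s n b})"
proof -
  have n1: "1 \<le> n" using assms by auto
  define a' where "a' = yule_parent s n a"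
  define b' where "b' = yule_parent s n b"
  have lt: "a' < n" "b' < n" using parent_lt[OF assms(1) _ n1] assms a'_def b'_def by auto
  have c2: "card {a, b} = 2" using assms by simp
  have img: "yule_parent s n ` {a, b} = {a', b'}" by (simp add: a'_def b'_def)
  show ?thesis
  proof (cases "a' = b'")
    case True
    have "ypred (Suc n) s {a, b} n"
      unfolding ypred_Suc[OF c2] img using True n1 by auto
    then have "split_index (Suc n) s {a, b} = n"
      unfolding split_index_alt using ypred_unique[OF assms] by (metis theI_unique)
    then show ?thesis using True a'_def b'_def by simp
  next
    case False
    have v: "valid n s" using valid_Suc[OF assms(1)] .
    have "ypred (Suc n) s {a, b} (split_index n s {a', b'})"
      unfolding ypred_Suc[OF c2] img using split_index_ypred[OF v lt False]
      by (auto simp: ypred_def)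
    then have "split_index (Suc n) s {a, b} = split_index n s {a', b'}"
      unfolding split_index_alt[of "Suc n"] using ypred_unique[OF assms] by (metis theI_unique)
    then show ?thesis using False a'_def b'_def by simp
  qed
qed



definition SS :: "nat \<Rightarrow> (nat \<Rightarrow> nat) set" where
  "SS n = PiE_dflt {1..<n} 0 (\<lambda>k. {0..<k})"

definition Pairs :: "nat \<Rightarrow> nat set set" where
  "Pairs n = {P. \<exists>a b. P = {a, b} \<and> a < n \<and> b < n \<and> a \<noteq> b}"

definition W :: "nat \<Rightarrow> (nat \<Rightarrow> real) \<Rightarrow> real" where
  "W n h = (\<Sum>s\<in>SS n. \<Sum>P\<in>Pairs n. h (split_index n s P))"

lemma SS_valid: "s \<in> SS n \<Longrightarrow> valid n s"
  by (auto simp: SS_def PiE_dflt_def valid_def)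

lemma finite_SS: "finite (SS n)"
  unfolding SS_def by (rule finite_PiE_dflt) auto

lemma card_SS: "card (SS n) = (\<Prod>k\<in>{1..<n}. k)"
  unfolding SS_def by (subst card_PiE_dflt) auto

lemma finite_Pairs: "finite (Pairs n)"
proof -
  have "Pairs n \<subseteq> Pow {..<n}" by (auto simp: Pairs_def)
  then show ?thesis by (rule finite_subset) auto
qed

lemma Pairs_Suc: "Pairs (Suc n) = Pairs n \<union> (\<lambda>v. {v, n}) ` {..<n}"
  unfolding Pairs_def
  apply (auto simp: less_Suc_eq)
  done

lemma sum_Pairs_Suc:
  "(\<Sum>P\<in>Pairs (Suc n). F P) = (\<Sum>P\<in>Pairs n. F P) + (\<Sum>v<n. F {v, n})"
proof -
  have disj: "Pairs n \<inter> (\<lambda>v. {v, n}) ` {..<n} = {}"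
    by (auto simp: Pairs_def doubleton_eq_iff)
  have inj: "inj_on (\<lambda>v. {v, n}) {..<n}"
    by (auto simp: inj_on_def doubleton_eq_iff)
  show ?thesis unfolding Pairs_Suc
    by (subst sum.union_disjoint) (use disj finite_Pairs in \<open>auto simp: sum.reindex[OF inj]\<close>)
qed

lemma sum_ordered_pairs:
  fixes F :: "nat set \<Rightarrow> real"
  shows "(\<Sum>y<n. \<Sum>v\<in>{..<n}-{y}. F {v, y}) = 2 * (\<Sum>P\<in>Pairs n. F P)"
proof (induction n)
  case 0 then show ?case by (simp add: Pairs_def)
next
  case (Suc n)
  have "(\<Sum>y<Suc n. \<Sum>v\<in>{..<Suc n}-{y}. F {v, y}) =
        (\<Sum>y<n. \<Sum>v\<in>{..<Suc n}-{y}. F {v, y}) + (\<Sum>v\<in>{..<n}. F {v, n})"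
    by (simp add: sum.lessThan_Suc lessThan_Suc)
  also have "(\<Sum>y<n. \<Sum>v\<in>{..<Suc n}-{y}. F {v, y}) =
        (\<Sum>y<n. F {n, y} + (\<Sum>v\<in>{..<n}-{y}. F {v, y}))"
  proof (rule sum.cong[OF refl])
    fix y assume "y \<in> {..<n}"
    then have "{..<Suc n}-{y} = insert n ({..<n}-{y})" by auto
    then show "(\<Sum>v\<in>{..<Suc n}-{y}. F {v, y}) = F {n, y} + (\<Sum>v\<in>{..<n}-{y}. F {v, y})"
      by simp
  qed
  also have "\<dots> = (\<Sum>y<n. F {y, n}) + (\<Sum>y<n. \<Sum>v\<in>{..<n}-{y}. F {v, y})"
    by (simp add: sum.distrib insert_commute)
  finally show ?case using Suc.IH sum_Pairs_Suc[of F n] by simp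
qed

lemma sum_PiE_dflt_insert:
  assumes "finite A" "x \<notin> A"
  shows "(\<Sum>f\<in>PiE_dflt (insert x A) d B. g f) = (\<Sum>f\<in>PiE_dflt A d B. \<Sum>y\<in>B x. g (f(x := y)))"
proof -
  have eq: "PiE_dflt (insert x A) d B = (\<lambda>(f, y). f(x := y)) ` (PiE_dflt A d B \<times> B x)"
  proof (intro equalityI subsetI)
    fix f assume f: "f \<in> PiE_dflt (insert x A) d B"
    have "(f(x := d), f x) \<in> PiE_dflt A d B \<times> B x"
      using f assms by (auto simp: PiE_dflt_def)
    moreover have "f = (\<lambda>(f, y). f(x := y)) (f(x := d), f x)" by simp
    ultimately show "f \<in> (\<lambda>(f, y). f(x := y)) ` (PiE_dflt A d B \<times> B x)" by blast
  qed (use assms in \<open>auto simp: PiE_dflt_def\<close>)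
  have inj: "inj_on (\<lambda>(f, y). f(x := y)) (PiE_dflt A d B \<times> B x)"
  proof (rule inj_onI, clarify)
    fix f y f' y'
    assume *: "f \<in> PiE_dflt A d B" "f' \<in> PiE_dflt A d B" "f(x := y) = f'(x := y')"
    then have "y = y'" by (metis fun_upd_same)
    moreover have "f = f'"
    proof
      fix z show "f z = f' z"
        using * assms by (cases "z = x") (auto simp: PiE_dflt_def dest: fun_cong[where x=z])
    qed
    ultimately show "f = f' \<and> y = y'" by simp
  qed
  show ?thesis
    unfolding eq by (subst sum.reindex[OF inj]) (auto simp: sum.cartesian_product intro!: sum.cong)
qed

lemma SS_Suc:
  assumes "1 \<le> n"
  shows "(\<Sum>s\<in>SS (Suc n). g s) = (\<Sum>s\<in>SS n. \<Sum>y<n. g (s(n := y)))"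
proof -
  have "{1..<Suc n} = insert n {1..<n}" using assms by auto
  then show ?thesis
    unfolding SS_def by (simp add: sum_PiE_dflt_insert atLeast0LessThan)
qed

lemma inner_step:
  assumes s: "s \<in> SS n" and y: "y < n"
  shows "(\<Sum>P\<in>Pairs (Suc n). h (split_index (Suc n) (s(n := y)) P)) =
         (\<Sum>P\<in>Pairs n. h (split_index n s P)) + h n +
         (\<Sum>v\<in>{..<n}-{y}. h (split_index n s {v, y}))"
proof -
  let ?s = "s(n := y)"
  have v: "valid (Suc n) ?s" using SS_valid[OF s] y by (auto simp: valid_def)
  have loc: "split_index n ?s Q = split_index n s Q" for Q
    by (rule split_index_local) auto
  have 1: "(\<Sum>P\<in>Pairs n. h (split_index (Suc n) ?s P)) = (\<Sum>P\<in>Pairs n. h (split_index n s P))"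
  proof (rule sum.cong[OF refl])
    fix P assume "P \<in> Pairs n"
    then obtain a b where P: "P = {a, b}" "a < n" "b < n" "a \<noteq> b" by (auto simp: Pairs_def)
    have "split_index (Suc n) ?s {a, b} = split_index n s {a, b}"
      using split_index_Suc[OF v, of a b] P by (simp add: yule_parent_def loc)
    then show "h (split_index (Suc n) ?s P) = h (split_index n s P)" using P by simp
  qed
  have 2: "h (split_index (Suc n) ?s {v, n}) = (if v = y then h n else h (split_index n s {v, y}))"
    if "v < n" for v
    using split_index_Suc[OF v, of v n] that by (simp add: yule_parent_def loc)
  have 3: "(\<Sum>v<n. h (split_index (Suc n) ?s {v, n})) = h n + (\<Sum>v\<in>{..<n}-{y}. h (split_index n s {v, y}))"
    using y by (simp add: 2 sum.remove[of "{..<n}" y])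
  show ?thesis
    unfolding sum_Pairs_Suc 1 3 by (simp add: add.assoc)
qed

definition cc :: "nat \<Rightarrow> nat \<Rightarrow> real" where
  "cc n k = fact (n + 1) / ((real k + 1) * (real k + 2))"

lemma W_formula: "W n h = (\<Sum>k\<in>{1..<n}. cc n k * h k)"
proof (induction n)
  case 0 then show ?case by (simp add: W_def Pairs_def)
next
  case (Suc n)
  show ?case
  proof (cases "n = 0")
    case True then show ?thesis by (simp add: W_def Pairs_def)
  next
    case False
    then have n1: "1 \<le> n" by simp
    have "W (Suc n) h = (\<Sum>s\<in>SS n. \<Sum>y<n. \<Sum>P\<in>Pairs (Suc n). h (split_index (Suc n) (s(n := y)) P))"
      unfolding W_def by (rule SS_Suc[OF n1])
    also have "\<dots> = (\<Sum>s\<in>SS n. (real n + 2) * (\<Sum>P\<in>Pairs n. h (split_index n s P)) + real n * h n)"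
    proof (rule sum.cong[OF refl])
      fix s assume s: "s \<in> SS n"
      have "(\<Sum>y<n. \<Sum>P\<in>Pairs (Suc n). h (split_index (Suc n) (s(n := y)) P)) =
         (\<Sum>y<n. (\<Sum>P\<in>Pairs n. h (split_index n s P)) + h n +
         (\<Sum>v\<in>{..<n}-{y}. h (split_index n s {v, y})))"
        by (rule sum.cong[OF refl], rule inner_step[OF s]) simp
      also have "\<dots> = real n * (\<Sum>P\<in>Pairs n. h (split_index n s P)) + real n * h n +
          2 * (\<Sum>P\<in>Pairs n. h (split_index n s P))"
        by (simp add: sum.distrib sum_ordered_pairs[of "\<lambda>P. h (split_index n s P)"]) (simp add: ring_distribs)
      finally show "(\<Sum>y<n. \<Sum>P\<in>Pairs (Suc n). h (split_index (Suc n) (s(n := y)) P)) =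
          (real n + 2) * (\<Sum>P\<in>Pairs n. h (split_index n s P)) + real n * h n"
        by (simp add: algebra_simps)
    qed
    also have "\<dots> = (real n + 2) * W n h + real n * real (card (SS n)) * h n"
      by (simp add: sum.distrib sum_distrib_left W_def)
    also have "real n * real (card (SS n)) = fact n"
    proof -
      have "real (card (SS n)) = fact (n - 1)"
      proof -
        have "{1..<n} = {1..n-1}" using n1 by auto
        then show ?thesis unfolding card_SS by (simp add: fact_prod)
      qed
      then show ?thesis using n1 by (simp add: fact_reduce[of n])
    qed
    also have "(real n + 2) * W n h = (\<Sum>k\<in>{1..<n}. cc (Suc n) k * h k)"
      unfolding Suc.IH sum_distrib_left
      by (rule sum.cong[OF refl]) (simp add: cc_def)
    also have "fact n = cc (Suc n) n"
    proof -
      have "fact (Suc n + 1) = (real n + 2) * ((real n + 1) * (fact n :: real))"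
        by (simp add: algebra_simps)
      then have "cc (Suc n) n = ((real n + 1) * (real n + 2)) * fact n / ((real n + 1) * (real n + 2))"
        unfolding cc_def by (simp add: ac_simps)
      moreover have "(real n + 1) * (real n + 2) \<noteq> 0" by (simp add: add_pos_pos)
      ultimately show ?thesis by simp
    qed
    also have "(\<Sum>k\<in>{1..<n}. cc (Suc n) k * h k) + cc (Suc n) n * h n = (\<Sum>k\<in>{1..<Suc n}. cc (Suc n) k * h k)"
      using n1 by (simp add: atLeastLessThanSuc)
    finally show ?thesis .
  qed
qed



lemma pmf_fubini:
  fixes p :: "'a pmf" and N :: "'b measure" and G :: "'a \<times> 'b \<Rightarrow> real"
  assumes fin: "finite (set_pmf p)" and N: "prob_space N"
    and meas: "G \<in> borel_measurable (measure_pmf p \<Otimes>\<^sub>M N)"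
    and int: "\<And>d. d \<in> set_pmf p \<Longrightarrow> integrable N (\<lambda>t. G (d, t))"
  shows "integrable (measure_pmf p \<Otimes>\<^sub>M N) G"
    and "integral\<^sup>L (measure_pmf p \<Otimes>\<^sub>M N) G = (\<Sum>d\<in>set_pmf p. pmf p d * integral\<^sup>L N (\<lambda>t. G (d, t)))"
proof -
  interpret N: prob_space N by (rule N)
  interpret P: pair_sigma_finite "measure_pmf p" N
    by (intro pair_sigma_finite.intro) (simp_all add: measure_pmf.sigma_finite_measure_axioms N.sigma_finite_measure_axioms)
  have mn: "(\<lambda>x. ennreal (norm (G x))) \<in> borel_measurable (measure_pmf p \<Otimes>\<^sub>M N)"
    using meas by measurable
  have "(\<integral>\<^sup>+ x. ennreal (norm (G x)) \<partial>(measure_pmf p \<Otimes>\<^sub>M N)) =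
        (\<integral>\<^sup>+ d. \<integral>\<^sup>+ t. ennreal (norm (G (d, t))) \<partial>N \<partial>measure_pmf p)"
    using N.nn_integral_fst[OF mn] by simp
  also have "\<dots> = (\<Sum>d\<in>set_pmf p. (\<integral>\<^sup>+ t. ennreal (norm (G (d, t))) \<partial>N) * pmf p d)"
    by (rule nn_integral_measure_pmf_finite[OF fin]) simp
  also have "\<dots> < \<infinity>"
    using int fin by (auto simp: integrable_iff_bounded ennreal_mult_less_top less_top[symmetric] ennreal_mult_eq_top_iff)
  finally show I: "integrable (measure_pmf p \<Otimes>\<^sub>M N) G"
    using meas by (auto simp: integrable_iff_bounded)
  have "integral\<^sup>L (measure_pmf p \<Otimes>\<^sub>M N) G = (\<integral>d. (\<integral>t. G (d, t) \<partial>N) \<partial>measure_pmf p)"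
    using P.integral_fst'[OF I] by simp
  also have "\<dots> = (\<Sum>d\<in>set_pmf p. (\<integral>t. G (d, t) \<partial>N) * pmf p d)"
    by (rule integral_measure_pmf_real[OF fin]) simp
  finally show "integral\<^sup>L (measure_pmf p \<Otimes>\<^sub>M N) G = (\<Sum>d\<in>set_pmf p. pmf p d * integral\<^sup>L N (\<lambda>t. G (d, t)))"
    by (simp add: mult.commute)
qed

lemma Pairs_nonempty: "2 \<le> n \<Longrightarrow> Pairs n \<noteq> {}"
proof -
  assume "2 \<le> n"
  then have "{0, 1} \<in> Pairs n" unfolding Pairs_def
    by (intro CollectI exI[of _ "0::nat"] exI[of _ "1::nat"]) auto
  then show ?thesis by auto
qed

lemma SS_nonempty: "SS n \<noteq> {}"
  unfolding SS_def by (subst PiE_dflt_empty_iff) auto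

lemma yule_discrete_eq: "2 \<le> n \<Longrightarrow> yule_discrete n = pair_pmf (pmf_of_set (SS n)) (pmf_of_set (Pairs n))"
  unfolding yule_discrete_def SS_def Pairs_def
  by (subst Pi_pmf_of_set) auto

lemma set_yule_discrete: "2 \<le> n \<Longrightarrow> set_pmf (yule_discrete n) = SS n \<times> Pairs n"
  using SS_nonempty Pairs_nonempty finite_SS finite_Pairs by (simp add: yule_discrete_eq)

lemma pmf_yule_discrete: "2 \<le> n \<Longrightarrow> d \<in> SS n \<times> Pairs n \<Longrightarrow>
    pmf (yule_discrete n) d = 1 / real (card (SS n \<times> Pairs n))"
  using SS_nonempty Pairs_nonempty finite_SS finite_Pairs
  by (cases d) (simp add: yule_discrete_eq pmf_pair card_cartesian_product)

lemma card_Omega: "real (card (SS n \<times> Pairs n)) = W n (\<lambda>_. 1)"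
  unfolding W_def by (simp add: card_cartesian_product)

lemma sum_Omega: "(\<Sum>d\<in>SS n \<times> Pairs n. h (split_index n (fst d) (snd d))) = W n h"
  unfolding W_def by (simp add: sum.cartesian_product split_def)



definition rate :: "nat \<Rightarrow> real" where "rate i = (if i = 0 then 1 else real i)"
definition EM :: "nat \<Rightarrow> real measure" where "EM i = density lborel (exponential_density (rate i))"

lemma rate_pos: "0 < rate i" by (simp add: rate_def)

lemma EM_prob: "prob_space (EM i)"
  unfolding EM_def by (rule prob_space_exponential_density[OF rate_pos])

lemma EM_moment:
  "has_bochner_integral (EM m) (\<lambda>x. x ^ i) (fact i / rate m ^ i)"
proof -
  interpret prob_space "EM m" by (rule EM_prob)
  have "distributed (EM m) lborel (\<lambda>x. x) (erlang_density 0 (rate m))"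
    unfolding distributed_def EM_def
    by (auto simp: distr_id2)
  from has_bochner_integral_erlang_ith_moment[OF rate_pos this, of i] show ?thesis by simp
qed

lemma EM_int: "integrable (EM m) (\<lambda>x. x ^ i)" "integral\<^sup>L (EM m) (\<lambda>x. x ^ i) = fact i / rate m ^ i"
  using EM_moment[of m i] by (simp_all add: has_bochner_integral_iff)

lemma EM_int1: "integrable (EM m) (\<lambda>x. 1::real)" "integral\<^sup>L (EM m) (\<lambda>x. 1::real) = 1"
  using EM_int[of m 0] by auto

lemma EM_intx: "integrable (EM m) (\<lambda>x. x)" "integral\<^sup>L (EM m) (\<lambda>x. x) = 1 / rate m"
  using EM_int[of m 1] by auto

lemma EM_intx2: "integrable (EM m) (\<lambda>x. x * x)" "integral\<^sup>L (EM m) (\<lambda>x. x * x) = 2 / (rate m)\<^sup>2"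
  using EM_int[of m 2] by (auto simp: power2_eq_square)

lemma EM_space1[simp]: "measure (EM m) (space (EM m)) = 1"
  using prob_space.prob_space[OF EM_prob] .

interpretation EMP: product_sigma_finite EM
  unfolding product_sigma_finite_def
  using EM_prob prob_space_imp_sigma_finite by blast

definition TT :: "nat \<Rightarrow> (nat \<Rightarrow> real) measure" where "TT n = PiM {1..n} EM"

lemma TT_eq: "PiM {1..n} (\<lambda>i. density lborel (exponential_density (real i))) = TT n"
  unfolding TT_def EM_def by (rule PiM_cong) (auto simp: rate_def)

lemma TT_prob: "prob_space (TT n)"
  unfolding TT_def by (rule prob_space_PiM) (rule EM_prob)

lemma TT_single:
  assumes "i \<in> {1..n}"
  shows "integrable (TT n) (\<lambda>t. t i)" "integral\<^sup>L (TT n) (\<lambda>t. t i) = 1 / real i"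
proof -
  define f where "f = (\<lambda>m x. if m = i then x else (1::real))"
  have fi: "integrable (EM m) (f m)" for m
    by (cases "m = i") (simp_all add: f_def EM_intx EM_int1)
  have eq: "(\<Prod>m\<in>{1..n}. f m (t m)) = t i" for t
    using assms by (simp add: f_def)
  have I: "integrable (TT n) (\<lambda>t. \<Prod>m\<in>{1..n}. f m (t m))"
    unfolding TT_def by (rule EMP.product_integrable_prod) (auto simp: fi)
  then show "integrable (TT n) (\<lambda>t. t i)" by (simp only: eq)
  have J: "integral\<^sup>L (TT n) (\<lambda>t. \<Prod>m\<in>{1..n}. f m (t m)) = (\<Prod>m\<in>{1..n}. integral\<^sup>L (EM m) (f m))"
    unfolding TT_def by (rule EMP.product_integral_prod) (auto simp: fi)
  have "integral\<^sup>L (TT n) (\<lambda>t. t i) = (\<Prod>m\<in>{1..n}. integral\<^sup>L (EM m) (f m))"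
    using J by (simp only: eq)
  also have "\<dots> = (\<Prod>m\<in>{1..n}. if m = i then 1 / real i else 1)"
    by (rule prod.cong) (auto simp: f_def EM_intx EM_int1 rate_def)
  finally show "integral\<^sup>L (TT n) (\<lambda>t. t i) = 1 / real i" using assms by simp
qed

lemma TT_double:
  assumes "i \<in> {1..n}" "j \<in> {1..n}"
  shows "integrable (TT n) (\<lambda>t. t i * t j)"
    "integral\<^sup>L (TT n) (\<lambda>t. t i * t j) = 1 / (real i * real j) + (if i = j then 1 / (real i)\<^sup>2 else 0)"
proof -
  define f where "f = (\<lambda>m x. (if m = i then x else (1::real)) * (if m = j then x else 1))"
  have fi: "integrable (EM m) (f m)" for m
    by (cases "m = i"; cases "m = j") (simp_all add: f_def EM_intx EM_int1 EM_intx2)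
  have eq: "(\<Prod>m\<in>{1..n}. f m (t m)) = t i * t j" for t
    using assms by (simp add: f_def prod.distrib)
  have I: "integrable (TT n) (\<lambda>t. \<Prod>m\<in>{1..n}. f m (t m))"
    unfolding TT_def by (rule EMP.product_integrable_prod) (auto simp: fi)
  then show "integrable (TT n) (\<lambda>t. t i * t j)" by (simp only: eq)
  have J: "integral\<^sup>L (TT n) (\<lambda>t. \<Prod>m\<in>{1..n}. f m (t m)) = (\<Prod>m\<in>{1..n}. integral\<^sup>L (EM m) (f m))"
    unfolding TT_def by (rule EMP.product_integral_prod) (auto simp: fi)
  have "integral\<^sup>L (TT n) (\<lambda>t. t i * t j) = (\<Prod>m\<in>{1..n}. integral\<^sup>L (EM m) (f m))"
    using J by (simp only: eq)
  also have "\<dots> = (\<Prod>m\<in>{1..n}. (if m = i then (if i = j then 2 / (real i)\<^sup>2 else 1 / real i) else 1) *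
                                  (if m = j \<and> i \<noteq> j then 1 / real j else 1))"
    by (rule prod.cong) (use assms in \<open>auto simp: f_def EM_intx EM_int1 EM_intx2 rate_def\<close>)
  also have "\<dots> = 1 / (real i * real j) + (if i = j then 1 / (real i)\<^sup>2 else 0)"
    using assms by (auto simp: prod.distrib power2_eq_square)
  finally show "integral\<^sup>L (TT n) (\<lambda>t. t i * t j) = 1 / (real i * real j) + (if i = j then 1 / (real i)\<^sup>2 else 0)" .
qed



lemma TT_S1:
  assumes "k \<le> n"
  shows "integrable (TT n) (\<lambda>t. \<Sum>i=1..k. t i)" "integral\<^sup>L (TT n) (\<lambda>t. \<Sum>i=1..k. t i) = Hn k 1"
proof -
  have I: "integrable (TT n) (\<lambda>t. t i)" if "i \<in> {1..k}" for i
    using TT_single[of i n] that assms by auto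
  show "integrable (TT n) (\<lambda>t. \<Sum>i=1..k. t i)" using I by auto
  have "integral\<^sup>L (TT n) (\<lambda>t. \<Sum>i=1..k. t i) = (\<Sum>i=1..k. integral\<^sup>L (TT n) (\<lambda>t. t i))"
    using I by (rule Bochner_Integration.integral_sum[where f="\<lambda>i (t::nat\<Rightarrow>real). t i"])
  also have "\<dots> = (\<Sum>i=1..k. 1 / real i)"
    by (rule sum.cong) (use TT_single[of _ n] assms in auto)
  finally show "integral\<^sup>L (TT n) (\<lambda>t. \<Sum>i=1..k. t i) = Hn k 1" by (simp add: Hn_def)
qed

lemma TT_S2:
  assumes "k \<le> n"
  shows "integrable (TT n) (\<lambda>t. (\<Sum>i=1..k. t i)\<^sup>2)"
    "integral\<^sup>L (TT n) (\<lambda>t. (\<Sum>i=1..k. t i)\<^sup>2) = (Hn k 1)\<^sup>2 + Hn k 2"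
proof -
  have sq: "(\<Sum>i=1..k. t i)\<^sup>2 = (\<Sum>i=1..k. \<Sum>j=1..k. t i * t j)" for t :: "nat \<Rightarrow> real"
    by (simp add: power2_eq_square sum_product)
  have I: "integrable (TT n) (\<lambda>t. t i * t j)" if "i \<in> {1..k}" "j \<in> {1..k}" for i j
    using TT_double[of i n j] that assms by auto
  have I2: "integrable (TT n) (\<lambda>t. \<Sum>j=1..k. t i * t j)" if "i \<in> {1..k}" for i
    using I that by auto
  show "integrable (TT n) (\<lambda>t. (\<Sum>i=1..k. t i)\<^sup>2)"
    unfolding sq using I2 by auto
  have "integral\<^sup>L (TT n) (\<lambda>t. (\<Sum>i=1..k. t i)\<^sup>2) = (\<Sum>i=1..k. integral\<^sup>L (TT n) (\<lambda>t. \<Sum>j=1..k. t i * t j))"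
    unfolding sq using I2 by (rule Bochner_Integration.integral_sum[where f="\<lambda>i (t::nat\<Rightarrow>real). \<Sum>j=1..k. t i * t j"])
  also have "\<dots> = (\<Sum>i=1..k. \<Sum>j=1..k. integral\<^sup>L (TT n) (\<lambda>t. t i * t j))"
    using I by (intro sum.cong refl Bochner_Integration.integral_sum[where f="\<lambda>j (t::nat\<Rightarrow>real). t _ * t j"]) auto
  also have "\<dots> = (\<Sum>i=1..k. \<Sum>j=1..k. 1 / (real i * real j) + (if i = j then 1 / (real i)\<^sup>2 else 0))"
    by (intro sum.cong refl) (use TT_double[of _ n] assms in auto)
  also have "\<dots> = (\<Sum>i=1..k. \<Sum>j=1..k. 1 / (real i * real j)) + (\<Sum>i=1..k. 1 / (real i)\<^sup>2)"
    by (simp add: sum.distrib)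
  also have "(\<Sum>i=1..k. \<Sum>j=1..k. 1 / (real i * real j)) = (Hn k 1)\<^sup>2"
    by (simp add: Hn_def power2_eq_square sum_product)
  finally show "integral\<^sup>L (TT n) (\<lambda>t. (\<Sum>i=1..k. t i)\<^sup>2) = (Hn k 1)\<^sup>2 + Hn k 2"
    by (simp add: Hn_def)
qed

lemma TT_var:
  assumes "k \<le> n"
  shows "integrable (TT n) (\<lambda>t. ((\<Sum>i=1..k. t i) - c)\<^sup>2)"
    "integral\<^sup>L (TT n) (\<lambda>t. ((\<Sum>i=1..k. t i) - c)\<^sup>2) = Hn k 2 + (Hn k 1)\<^sup>2 - 2 * c * Hn k 1 + c\<^sup>2"
proof -
  interpret prob_space "TT n" by (rule TT_prob)
  have eq: "((\<Sum>i=1..k. t i) - c)\<^sup>2 = (\<Sum>i=1..k. t i)\<^sup>2 - 2 * c * (\<Sum>i=1..k. t i) + c\<^sup>2" for t :: "nat \<Rightarrow> real"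
    by (simp add: power2_diff)
  show "integrable (TT n) (\<lambda>t. ((\<Sum>i=1..k. t i) - c)\<^sup>2)"
    unfolding eq using TT_S1[OF assms] TT_S2[OF assms] by auto
  show "integral\<^sup>L (TT n) (\<lambda>t. ((\<Sum>i=1..k. t i) - c)\<^sup>2) = Hn k 2 + (Hn k 1)\<^sup>2 - 2 * c * Hn k 1 + c\<^sup>2"
    unfolding eq using TT_S1[OF assms] TT_S2[OF assms] by (simp add: integral_diff integral_add prob_space)
qed

lemma Hn_Suc: "Hn (Suc n) r = Hn n r + 1 / real (Suc n) ^ r"
  by (simp add: Hn_def)

definition Wu :: "nat \<Rightarrow> (nat \<Rightarrow> real) \<Rightarrow> real" where
  "Wu n h = (\<Sum>k\<in>{1..<n}. h k / ((real k + 1) * (real k + 2)))"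

lemma W_Wu: "W n h = fact (n + 1) * Wu n h"
  unfolding W_formula Wu_def cc_def sum_distrib_left by (simp add: field_simps)

lemma Wu_Suc: "1 \<le> n \<Longrightarrow> Wu (Suc n) h = Wu n h + h n / ((real n + 1) * (real n + 2))"
  unfolding Wu_def by (simp add: atLeastLessThanSuc)

lemma Wu_Suc': "Wu (Suc (Suc n)) h = Wu (Suc n) h + h (Suc n) / ((real n + 2) * (real n + 3))"
  using Wu_Suc[of "Suc n" h] by (simp add: add.commute add.left_commute)

lemma alg1: "(x::real) \<ge> 0 \<Longrightarrow> x / (2 * (x + 2)) + 1 / ((x+2)*(x+3)) = (x+1) / (2*(x+3))"
  by (simp add: divide_simps) (simp add: algebra_simps)
lemma alg2: "(x::real) \<ge> 0 \<Longrightarrow>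
   (x + 1 - h) / (x + 2) + h / ((x+2)*(x+3)) = (x + 2 - (h + 1/(x+2))) / (x+3)"
  by (simp add: divide_simps) (simp add: algebra_simps)
lemma alg3: "(x::real) \<ge> 0 \<Longrightarrow>
   (x + 1) * (g - 1) / (x + 2) + g / ((x+2)*(x+3)) = (x + 2) * (g + 1/(x+2)^2 - 1) / (x+3)"
  by (simp add: divide_simps) (simp add: algebra_simps power2_eq_square)
lemma alg4: "(x::real) \<ge> 0 \<Longrightarrow>
   g + 1 - (h+1)^2 / (x + 2) + h^2 / ((x+2)*(x+3)) = g + 1/(x+2)^2 + 1 - (h + 1/(x+2) + 1)^2 / (x+3)"
  by (simp add: divide_simps) (simp add: algebra_simps power2_eq_square)

lemma Wu_1: "Wu (Suc n) (\<lambda>_. 1) = real n / (2 * (real n + 2))"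
proof (induction n)
  case 0 then show ?case by (simp add: Wu_def)
next
  case (Suc n)
  have "Wu (Suc (Suc n)) (\<lambda>_. 1) = real n / (2 * (real n + 2)) + 1 / ((real n + 2) * (real n + 3))"
    unfolding Wu_Suc' Suc.IH ..
  also have "\<dots> = (real n + 1) / (2 * (real n + 3))" by (rule alg1) simp
  finally show ?case by (simp add: add_ac)
qed

lemma Wu_H1: "Wu (Suc n) (\<lambda>k. Hn k 1) = (real (Suc n) - Hn (Suc n) 1) / (real n + 2)"
proof (induction n)
  case 0 then show ?case by (simp add: Wu_def Hn_def)
next
  case (Suc n)
  have "Wu (Suc (Suc n)) (\<lambda>k. Hn k 1) = (real n + 1 - Hn (Suc n) 1) / (real n + 2) + Hn (Suc n) 1 / ((real n + 2) * (real n + 3))"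
    unfolding Wu_Suc' Suc.IH by simp
  also have "\<dots> = (real n + 2 - (Hn (Suc n) 1 + 1 / (real n + 2))) / (real n + 3)" by (rule alg2) simp
  also have "Hn (Suc n) 1 + 1 / (real n + 2) = Hn (Suc (Suc n)) 1"
    by (simp add: Hn_Suc[of "Suc n"] add_ac)
  finally show ?case by (simp add: add_ac)
qed

lemma Wu_H2: "Wu (Suc n) (\<lambda>k. Hn k 2) = real (Suc n) * (Hn (Suc n) 2 - 1) / (real n + 2)"
proof (induction n)
  case 0 then show ?case by (simp add: Wu_def Hn_def)
next
  case (Suc n)
  have "Wu (Suc (Suc n)) (\<lambda>k. Hn k 2) = (real n + 1) * (Hn (Suc n) 2 - 1) / (real n + 2) + Hn (Suc n) 2 / ((real n + 2) * (real n + 3))"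
    unfolding Wu_Suc' Suc.IH by simp
  also have "\<dots> = (real n + 2) * (Hn (Suc n) 2 + 1 / (real n + 2)^2 - 1) / (real n + 3)" by (rule alg3) simp
  also have "Hn (Suc n) 2 + 1 / (real n + 2)^2 = Hn (Suc (Suc n)) 2"
    by (simp add: Hn_Suc[of "Suc n"] add_ac)
  finally show ?case by (simp add: add_ac)
qed

lemma Wu_H1sq: "Wu (Suc n) (\<lambda>k. (Hn k 1)\<^sup>2) = Hn (Suc n) 2 + 1 - (Hn (Suc n) 1 + 1)\<^sup>2 / (real n + 2)"
proof (induction n)
  case 0 then show ?case by (simp add: Wu_def Hn_def)
next
  case (Suc n)
  have "Wu (Suc (Suc n)) (\<lambda>k. (Hn k 1)\<^sup>2) = Hn (Suc n) 2 + 1 - (Hn (Suc n) 1 + 1)\<^sup>2 / (real n + 2) + (Hn (Suc n) 1)\<^sup>2 / ((real n + 2) * (real n + 3))"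
    unfolding Wu_Suc' Suc.IH by simp
  also have "\<dots> = Hn (Suc n) 2 + 1 / (real n + 2)^2 + 1 - (Hn (Suc n) 1 + 1 / (real n + 2) + 1)\<^sup>2 / (real n + 3)"
    by (rule alg4) simp
  also have "Hn (Suc n) 1 + 1 / (real n + 2) = Hn (Suc (Suc n)) 1"
    by (simp add: Hn_Suc[of "Suc n"] add_ac)
  also have "Hn (Suc n) 2 + 1 / (real n + 2)^2 = Hn (Suc (Suc n)) 2"
    by (simp add: Hn_Suc[of "Suc n"] add_ac)
  finally show ?case by (simp add: add_ac)
qed



abbreviation kap :: "nat \<Rightarrow> (nat \<Rightarrow> nat) \<times> nat set \<Rightarrow> nat" where
  "kap n d \<equiv> split_index n (fst d) (snd d)"

lemma kap_range:
  assumes "d \<in> SS n \<times> Pairs n" shows "kap n d \<in> {1..<n}"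
proof -
  obtain s P where d: "d = (s, P)" "s \<in> SS n" "P \<in> Pairs n" using assms by auto
  then obtain a b where P: "P = {a, b}" "a < n" "b < n" "a \<noteq> b" by (auto simp: Pairs_def)
  show ?thesis using split_index_range[OF SS_valid[OF d(2)] P(2-4)] d P by simp
qed

lemma X_eq:
  assumes "d \<in> SS n \<times> Pairs n"
  shows "yule_height n (d, t) - yule_coal n (d, t) = (\<Sum>i=1..kap n d. t i)"
proof -
  have k: "kap n d \<in> {1..<n}" by (rule kap_range[OF assms])
  have "{1..n} = {1..kap n d} \<union> {kap n d + 1..n}" using k by auto
  moreover have "{1..kap n d} \<inter> {kap n d + 1..n} = {}" by auto
  ultimately have "(\<Sum>i=1..n. t i) = (\<Sum>i=1..kap n d. t i) + (\<Sum>i=kap n d + 1..n. t i)"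
    by (simp add: sum.union_disjoint)
  then show ?thesis by (simp add: yule_height_def yule_coal_def)
qed

lemma coal_alt: "yule_coal n \<omega> = (\<Sum>i\<in>{1..n}. (if kap n (fst \<omega>) < i then 1 else 0) * snd \<omega> i)"
proof -
  have "{kap n (fst \<omega>) + 1..n} = {i \<in> {1..n}. kap n (fst \<omega>) < i}" by auto
  then show ?thesis unfolding yule_coal_def
    by (simp only: sum.inter_filter[OF finite_atLeastAtMost]) (rule sum.cong; simp)
qed

lemma yule_space_eq: "yule_space n = measure_pmf (yule_discrete n) \<Otimes>\<^sub>M TT n"
  unfolding yule_space_def TT_eq ..

lemma X_meas: "(\<lambda>\<omega>. yule_height n \<omega> - yule_coal n \<omega>) \<in> borel_measurable (yule_space n)"
proof -
  have s: "(\<lambda>\<omega>. snd \<omega> i) \<in> borel_measurable (measure_pmf (yule_discrete n) \<Otimes>\<^sub>M TT n)"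
    if "i \<in> {1..n}" for i
  proof -
    have "(\<lambda>t. t i) \<in> measurable (TT n) (EM i)"
      unfolding TT_def by (rule measurable_component_singleton[OF that])
    moreover have "measurable (TT n) (EM i) = measurable (TT n) borel"
      by (rule measurable_cong_sets) (simp_all add: EM_def)
    ultimately show ?thesis by (intro measurable_compose[OF measurable_snd]) simp
  qed
  have f: "(\<lambda>\<omega>. g (fst \<omega>)) \<in> borel_measurable (measure_pmf (yule_discrete n) \<Otimes>\<^sub>M TT n)"
    for g :: "_ \<Rightarrow> real"
    by (rule measurable_compose[OF measurable_fst]) simp
  have "(\<lambda>\<omega>. (\<Sum>i\<in>{1..n}. snd \<omega> i) - (\<Sum>i\<in>{1..n}. (if kap n (fst \<omega>) < i then 1 else 0) * snd \<omega> i))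
        \<in> borel_measurable (measure_pmf (yule_discrete n) \<Otimes>\<^sub>M TT n)"
    using s f[of "\<lambda>d. if kap n d < _ then 1 else 0"]
    by (intro borel_measurable_diff borel_measurable_sum borel_measurable_times) auto
  then show ?thesis unfolding yule_space_eq coal_alt yule_height_def .
qed

lemma main_int:
  assumes n: "2 \<le> n"
    and meas: "F \<in> borel_measurable (yule_space n)"
    and eq: "\<And>d t. d \<in> SS n \<times> Pairs n \<Longrightarrow> F (d, t) = \<phi> (kap n d) t"
    and int: "\<And>k. k \<in> {1..<n} \<Longrightarrow> integrable (TT n) (\<phi> k)"
  shows "integral\<^sup>L (yule_space n) F = W n (\<lambda>k. integral\<^sup>L (TT n) (\<phi> k)) / W n (\<lambda>_. 1)"
proof -
  have fin: "finite (set_pmf (yule_discrete n))"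
    using set_yule_discrete[OF n] finite_SS finite_Pairs by simp
  have intd: "integrable (TT n) (\<lambda>t. F (d, t))" if "d \<in> set_pmf (yule_discrete n)" for d
  proof -
    have d: "d \<in> SS n \<times> Pairs n" using that set_yule_discrete[OF n] by simp
    show ?thesis using int[OF kap_range[OF d]] by (simp add: eq[OF d])
  qed
  have "integral\<^sup>L (yule_space n) F =
      (\<Sum>d\<in>set_pmf (yule_discrete n). pmf (yule_discrete n) d * integral\<^sup>L (TT n) (\<lambda>t. F (d, t)))"
    unfolding yule_space_eq
    by (rule pmf_fubini(2)[OF fin TT_prob]) (use meas intd in \<open>auto simp: yule_space_eq\<close>)
  also have "\<dots> = (\<Sum>d\<in>SS n \<times> Pairs n. 1 / real (card (SS n \<times> Pairs n)) * integral\<^sup>L (TT n) (\<phi> (kap n d)))"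
    unfolding set_yule_discrete[OF n]
    by (rule sum.cong[OF refl]) (simp add: pmf_yule_discrete[OF n] eq)
  also have "\<dots> = W n (\<lambda>k. integral\<^sup>L (TT n) (\<phi> k)) / W n (\<lambda>_. 1)"
    unfolding sum_distrib_left[symmetric] sum_Omega[where h="\<lambda>k. integral\<^sup>L (TT n) (\<phi> k)"] card_Omega by simp
  finally show ?thesis .
qed

lemma Wu_pos: "2 \<le> n \<Longrightarrow> Wu n (\<lambda>_. 1) > 0"
proof -
  assume "2 \<le> n"
  then obtain m where m: "n = Suc m" "1 \<le> m" by (cases n) auto
  show ?thesis unfolding m Wu_1 using m by simp
qed

lemma W_ratio: "2 \<le> n \<Longrightarrow> W n h / W n (\<lambda>_. 1) = Wu n h / Wu n (\<lambda>_. 1)"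
  unfolding W_Wu by simp

lemma Wu_lin: "Wu n (\<lambda>k. Hn k 2 + (Hn k 1)\<^sup>2 - 2 * c * Hn k 1 + c\<^sup>2) =
   Wu n (\<lambda>k. Hn k 2) + Wu n (\<lambda>k. (Hn k 1)\<^sup>2) - 2 * c * Wu n (\<lambda>k. Hn k 1) + c\<^sup>2 * Wu n (\<lambda>_. 1)"
  unfolding Wu_def
  by (simp add: sum.distrib sum_subtractf sum_distrib_left add_divide_distrib diff_divide_distrib mult.assoc)

lemma V_formula:
  assumes n: "2 \<le> n"
  defines "m \<equiv> Wu n (\<lambda>k. Hn k 1) / Wu n (\<lambda>_. 1)"
  shows "integral\<^sup>L (yule_space n) (\<lambda>\<omega>. yule_height n \<omega> - yule_coal n \<omega>) = m"
    and "integral\<^sup>L (yule_space n) (\<lambda>\<omega>. (yule_height n \<omega> - yule_coal n \<omega> - c)\<^sup>2) =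
          (Wu n (\<lambda>k. Hn k 2) + Wu n (\<lambda>k. (Hn k 1)\<^sup>2) - 2 * c * Wu n (\<lambda>k. Hn k 1) + c\<^sup>2 * Wu n (\<lambda>_. 1))
          / Wu n (\<lambda>_. 1)"
proof -
  have "integral\<^sup>L (yule_space n) (\<lambda>\<omega>. yule_height n \<omega> - yule_coal n \<omega>) =
        W n (\<lambda>k. integral\<^sup>L (TT n) (\<lambda>t. \<Sum>i=1..k. t i)) / W n (\<lambda>_. 1)"
    by (rule main_int[OF n X_meas, where \<phi>="\<lambda>k t. \<Sum>i=1..k. t i"]) (auto simp: X_eq intro!: TT_S1(1)[simplified])
  also have "W n (\<lambda>k. integral\<^sup>L (TT n) (\<lambda>t. \<Sum>i=1..k. t i)) = W n (\<lambda>k. Hn k 1)"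
    unfolding W_formula by (rule sum.cong[OF refl]) (simp add: TT_S1(2)[simplified])
  finally show "integral\<^sup>L (yule_space n) (\<lambda>\<omega>. yule_height n \<omega> - yule_coal n \<omega>) = m"
    unfolding m_def using W_ratio[OF n] by simp
  have "integral\<^sup>L (yule_space n) (\<lambda>\<omega>. (yule_height n \<omega> - yule_coal n \<omega> - c)\<^sup>2) =
        W n (\<lambda>k. integral\<^sup>L (TT n) (\<lambda>t. ((\<Sum>i=1..k. t i) - c)\<^sup>2)) / W n (\<lambda>_. 1)"
  proof (rule main_int[OF n, where \<phi>="\<lambda>k t. ((\<Sum>i=1..k. t i) - c)\<^sup>2"])
    show "(\<lambda>\<omega>. (yule_height n \<omega> - yule_coal n \<omega> - c)\<^sup>2) \<in> borel_measurable (yule_space n)"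
      using X_meas[of n] by auto
    show "(yule_height n (d, t) - yule_coal n (d, t) - c)\<^sup>2 = ((\<Sum>i=1..kap n d. t i) - c)\<^sup>2"
      if "d \<in> SS n \<times> Pairs n" for d t using that by (simp add: X_eq)
    show "integrable (TT n) (\<lambda>t. ((\<Sum>i=1..k. t i) - c)\<^sup>2)" if "k \<in> {1..<n}" for k
      using TT_var(1)[of k n c] that by simp
  qed
  also have "W n (\<lambda>k. integral\<^sup>L (TT n) (\<lambda>t. ((\<Sum>i=1..k. t i) - c)\<^sup>2)) =
             W n (\<lambda>k. Hn k 2 + (Hn k 1)\<^sup>2 - 2 * c * Hn k 1 + c\<^sup>2)"
    unfolding W_formula by (rule sum.cong[OF refl]) (simp add: TT_var(2)[simplified])
  finally show "integral\<^sup>L (yule_space n) (\<lambda>\<omega>. (yule_height n \<omega> - yule_coal n \<omega> - c)\<^sup>2) =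
          (Wu n (\<lambda>k. Hn k 2) + Wu n (\<lambda>k. (Hn k 1)\<^sup>2) - 2 * c * Wu n (\<lambda>k. Hn k 1) + c\<^sup>2 * Wu n (\<lambda>_. 1))
          / Wu n (\<lambda>_. 1)"
    using W_ratio[OF n] Wu_lin by simp
qed



lemma alg5:
  fixes x g h :: real
  assumes "x > 0"
  defines "w1 \<equiv> x / (2 * (x + 2))" and "wh \<equiv> (x + 1 - h) / (x + 2)"
    and "wg \<equiv> (x + 1) * (g - 1) / (x + 2)" and "whh \<equiv> g + 1 - (h + 1)^2 / (x + 2)"
  shows "(wg + whh - 2 * (wh / w1) * wh + (wh / w1)^2 * w1) / w1 =
     4 * (g - 1) - 2 * h^2 / x + 4 * h / x + 6 * g / x - 8 / x - 4 * (h - 1)^2 / x^2"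
  using assms(1) unfolding w1_def wh_def wg_def whh_def
  by (simp add: divide_simps) (simp add: algebra_simps power2_eq_square)

lemma V_closed:
  assumes n: "2 \<le> n"
  shows "integral\<^sup>L (yule_space n) (\<lambda>\<omega>. (yule_height n \<omega> - yule_coal n \<omega> -
            integral\<^sup>L (yule_space n) (\<lambda>\<omega>. yule_height n \<omega> - yule_coal n \<omega>))\<^sup>2) =
         4 * (Hn n 2 - 1) - 2 * (Hn n 1)\<^sup>2 / (real n - 1) + 4 * Hn n 1 / (real n - 1)
            + 6 * Hn n 2 / (real n - 1) - 8 / (real n - 1)
            - 4 * (Hn n 1 - 1)\<^sup>2 / (real n - 1)\<^sup>2"
proof -
  obtain m where m: "n = Suc m" "1 \<le> m" using n by (cases n) auto
  have x: "real n - 1 = real m" using m by simp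
  have w1: "Wu n (\<lambda>_. 1) = real m / (2 * (real m + 2))" unfolding m(1) Wu_1 ..
  have wh: "Wu n (\<lambda>k. Hn k 1) = (real m + 1 - Hn n 1) / (real m + 2)"
    unfolding m(1) Wu_H1 by simp
  have wg: "Wu n (\<lambda>k. Hn k 2) = (real m + 1) * (Hn n 2 - 1) / (real m + 2)"
    unfolding m(1) Wu_H2 by simp
  have whh: "Wu n (\<lambda>k. (Hn k 1)\<^sup>2) = Hn n 2 + 1 - (Hn n 1 + 1)\<^sup>2 / (real m + 2)"
    unfolding m(1) Wu_H1sq ..
  show ?thesis
    unfolding V_formula(1)[OF n] V_formula(2)[OF n] x w1 wh wg whh
    using alg5[of "real m" "Hn n 2" "Hn n 1"] m by simp
qed

lemma Hn_harm: "Hn n 1 = harm n"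
  by (simp add: Hn_def harm_def inverse_eq_divide)

lemma Hn_ge1: "1 \<le> n \<Longrightarrow> 1 \<le> Hn n 1"
  unfolding Hn_harm using harm_mono[of 1 n] by (simp add: harm_def)

lemma Hn_le: "1 \<le> n \<Longrightarrow> Hn n 1 \<le> 1 + ln (real n)"
proof -
  assume "1 \<le> n"
  then obtain m where m: "n = Suc m" by (cases n) auto
  have "harm (Suc m) - ln (real (Suc m)) \<le> harm (Suc 0) - ln (real (Suc 0))"
    using decseq_harm_diff_ln unfolding decseq_def by (metis le0)
  then show ?thesis unfolding Hn_harm m by (simp add: harm_def)
qed

lemma Hn2_lim: "(\<lambda>n. Hn n 2) \<longlonglongrightarrow> pi\<^sup>2 / 6"
proof -
  have eq: "Hn n 2 = (\<Sum>i<n. 1 / (1 + real i)\<^sup>2)" for n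
    by (induction n) (simp_all add: Hn_def add_ac)
  show ?thesis using inverse_squares_sums unfolding sums_def eq by simp
qed

lemma lim_a: "(\<lambda>n. (Hn n 1)\<^sup>2 / (real n - 1)) \<longlonglongrightarrow> 0"
proof (rule tendsto_sandwich[where f="\<lambda>_. 0" and h="\<lambda>n. (1 + ln (real n))\<^sup>2 / (real n - 1)"])
  show "eventually (\<lambda>n. 0 \<le> (Hn n 1)\<^sup>2 / (real n - 1)) sequentially"
    using eventually_ge_at_top[of 2] by eventually_elim simp
  show "eventually (\<lambda>n. (Hn n 1)\<^sup>2 / (real n - 1) \<le> (1 + ln (real n))\<^sup>2 / (real n - 1)) sequentially"
    using eventually_ge_at_top[of 2]
  proof eventually_elim
    case (elim n)
    have "0 \<le> Hn n 1" using Hn_ge1[of n] elim by simp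
    then have "(Hn n 1)\<^sup>2 \<le> (1 + ln (real n))\<^sup>2" using Hn_le[of n] elim by (intro power_mono) auto
    then show ?case using elim by (intro divide_right_mono) auto
  qed
  show "(\<lambda>n. (1 + ln (real n))\<^sup>2 / (real n - 1)) \<longlonglongrightarrow> 0" by real_asymp
qed simp

lemma lim_b: "(\<lambda>n. Hn n 1 / (real n - 1)) \<longlonglongrightarrow> 0"
proof (rule tendsto_sandwich[where f="\<lambda>_. 0" and h="\<lambda>n. (1 + ln (real n)) / (real n - 1)"])
  show "eventually (\<lambda>n. 0 \<le> Hn n 1 / (real n - 1)) sequentially"
    using eventually_ge_at_top[of 2]
  proof eventually_elim
    case (elim n)
    have "0 \<le> Hn n 1" using Hn_ge1[of n] elim by simp
    then show ?case using elim by simp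
  qed
  show "eventually (\<lambda>n. Hn n 1 / (real n - 1) \<le> (1 + ln (real n)) / (real n - 1)) sequentially"
    using eventually_ge_at_top[of 2]
  proof eventually_elim
    case (elim n)
    then show ?case using Hn_le[of n] by (intro divide_right_mono) auto
  qed
  show "(\<lambda>n. (1 + ln (real n)) / (real n - 1)) \<longlonglongrightarrow> 0" by real_asymp
qed simp

lemma lim_c: "(\<lambda>n. 1 / (real n - 1)) \<longlonglongrightarrow> 0"
  by real_asymp

lemma lim_e: "(\<lambda>n. (Hn n 1 - 1)\<^sup>2 / (real n - 1)\<^sup>2) \<longlonglongrightarrow> 0"
proof (rule tendsto_sandwich[where f="\<lambda>_. 0" and h="\<lambda>n. (1 + ln (real n))\<^sup>2 / (real n - 1)\<^sup>2"])
  show "eventually (\<lambda>n. 0 \<le> (Hn n 1 - 1)\<^sup>2 / (real n - 1)\<^sup>2) sequentially"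
    by simp
  show "eventually (\<lambda>n. (Hn n 1 - 1)\<^sup>2 / (real n - 1)\<^sup>2 \<le> (1 + ln (real n))\<^sup>2 / (real n - 1)\<^sup>2) sequentially"
    using eventually_ge_at_top[of 2]
  proof eventually_elim
    case (elim n)
    have "0 \<le> Hn n 1 - 1" using Hn_ge1[of n] elim by simp
    then have "(Hn n 1 - 1)\<^sup>2 \<le> (1 + ln (real n))\<^sup>2" using Hn_le[of n] elim by (intro power_mono) auto
    then show ?case by (intro divide_right_mono) auto
  qed
  show "(\<lambda>n. (1 + ln (real n))\<^sup>2 / (real n - 1)\<^sup>2) \<longlonglongrightarrow> 0" by real_asymp
qed simp

lemma target_lim:
  "(\<lambda>n. 4 * (Hn n 2 - 1) - 2 * (Hn n 1)\<^sup>2 / (real n - 1) + 4 * Hn n 1 / (real n - 1)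
            + 6 * Hn n 2 / (real n - 1) - 8 / (real n - 1)
            - 4 * (Hn n 1 - 1)\<^sup>2 / (real n - 1)\<^sup>2) \<longlonglongrightarrow> 2 * pi\<^sup>2 / 3 - 4"
proof -
  have eq: "4 * (Hn n 2 - 1) - 2 * (Hn n 1)\<^sup>2 / (real n - 1) + 4 * Hn n 1 / (real n - 1)
            + 6 * Hn n 2 / (real n - 1) - 8 / (real n - 1)
            - 4 * (Hn n 1 - 1)\<^sup>2 / (real n - 1)\<^sup>2 =
        4 * (Hn n 2 - 1) - 2 * ((Hn n 1)\<^sup>2 / (real n - 1)) + 4 * (Hn n 1 / (real n - 1))
            + 6 * (Hn n 2 * (1 / (real n - 1))) - 8 * (1 / (real n - 1))
            - 4 * ((Hn n 1 - 1)\<^sup>2 / (real n - 1)\<^sup>2)" for n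
    by simp
  have "(\<lambda>n. 4 * (Hn n 2 - 1) - 2 * ((Hn n 1)\<^sup>2 / (real n - 1)) + 4 * (Hn n 1 / (real n - 1))
            + 6 * (Hn n 2 * (1 / (real n - 1))) - 8 * (1 / (real n - 1))
            - 4 * ((Hn n 1 - 1)\<^sup>2 / (real n - 1)\<^sup>2)) \<longlonglongrightarrow>
        4 * (pi\<^sup>2 / 6 - 1) - 2 * 0 + 4 * 0 + 6 * (pi\<^sup>2 / 6 * 0) - 8 * 0 - 4 * 0"
    by (intro tendsto_intros Hn2_lim lim_a lim_b lim_c lim_e)
  moreover have "4 * (pi\<^sup>2 / 6 - 1) - 2 * 0 + 4 * 0 + 6 * (pi\<^sup>2 / 6 * 0) - 8 * 0 - 4 * 0 = 2 * pi\<^sup>2 / 3 - (4::real)"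
    by simp
  ultimately show ?thesis unfolding eq by simp
qed

theorem lemmaY4p10:
  defines "V \<equiv> \<lambda>n::nat.
     let M = yule_space n; X = (\<lambda>\<omega>. yule_height n \<omega> - yule_coal n \<omega>)
     in integral\<^sup>L M (\<lambda>\<omega>. (X \<omega> - integral\<^sup>L M X)\<^sup>2)"
  shows "(\<forall>n\<ge>2. V n =
            4 * (Hn n 2 - 1) - 2 * (Hn n 1)\<^sup>2 / (real n - 1) + 4 * Hn n 1 / (real n - 1)
            + 6 * Hn n 2 / (real n - 1) - 8 / (real n - 1)
            - 4 * (Hn n 1 - 1)\<^sup>2 / (real n - 1)\<^sup>2)
       \<and> V \<longlonglongrightarrow> 2 * pi\<^sup>2 / 3 - 4"
proof
  show A: "\<forall>n\<ge>2. V n =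
            4 * (Hn n 2 - 1) - 2 * (Hn n 1)\<^sup>2 / (real n - 1) + 4 * Hn n 1 / (real n - 1)
            + 6 * Hn n 2 / (real n - 1) - 8 / (real n - 1)
            - 4 * (Hn n 1 - 1)\<^sup>2 / (real n - 1)\<^sup>2"
    unfolding V_def Let_def using V_closed by simp
  show "V \<longlonglongrightarrow> 2 * pi\<^sup>2 / 3 - 4"
  proof (rule Lim_transform_eventually[OF target_lim])
    show "eventually (\<lambda>n. 4 * (Hn n 2 - 1) - 2 * (Hn n 1)\<^sup>2 / (real n - 1) + 4 * Hn n 1 / (real n - 1)
            + 6 * Hn n 2 / (real n - 1) - 8 / (real n - 1)
            - 4 * (Hn n 1 - 1)\<^sup>2 / (real n - 1)\<^sup>2 = V n) sequentially"
      using eventually_ge_at_top[of 2] by eventually_elim (use A in simp)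
  qed
qed

end
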